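(* For $\vec S_n(\tau),\bar{\vec S}_n(\tau)\in\mathbb{C}^m$, $v_n(\tau)\in\mathbb{C}$ ($n\in\mathbb{Z}$), write $Q_n:=\langle\vec S_{n+1},\bar{\vec S}_n\rangle+\langle\vec S_n,\bar{\vec S}_{n+1}\rangle$. Consider the spatial linear problem for a scalar $\psi_n$ and vectors $\vec\phi_n,\vec\chi_n\in\mathbb{C}^m$ with constant spectral parameter $\lambda$: \begin{align*} v_n(\psi_{n+1}+\psi_{n-1})&=\lambda\psi_n-\langle\vec S_n,\vec\phi_n\rangle-\langle\vec\chi_n,\bar{\vec S}_n\rangle,\\ \vec\phi_{n+1}-\vec\phi_n&=\tfrac{\mathrm{i}}{2}\bar{\vec S}_n(\psi_{n+1}+\psi_{n-1}),\\ \vec\chi_{n+1}+\vec\chi_n&=\tfrac{\mathrm{i}}{2}\vec S_n(\psi_{n+1}+\psi_{n-1}), \end{align*} together with the time evolution \begin{align*} \psi_{n,\tau}={}&v_nv_{n+1}(\psi_{n+2}+\psi_n)-v_nv_{n-1}(\psi_n+\psi_{n-2})+\tfrac{\mathrm{i}}{2}v_n(Q_n+Q_{n-1})(\psi_{n+1}+\psi_{n-1}),\\ \vec\phi_{n,\tau}={}&\tfrac{\mathrm{i}}{2}v_nv_{n+1}\bar{\vec S}_{n-1}(\psi_{n+2}+\psi_n)+\tfrac{\mathrm{i}}{2}v_nv_{n-1}\bar{\vec S}_{n-2}(\psi_{n+1}+\psi_{n-1})\\ &+\tfrac{\mathrm{i}}{2}v_nv_{n-1}\bar{\vec S}_{n+1}(\psi_n+\psi_{n-2})+\tfrac{\mathrm{i}}{2}v_{n-1}v_{n-2}\bar{\vec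 S}_n(\psi_{n-1}+\psi_{n-3})\\ &-\tfrac14 v_n(Q_n+Q_{n-1})\bar{\vec S}_{n-1}(\psi_{n+1}+\psi_{n-1})+\tfrac14 v_{n-1}(Q_{n-1}+Q_{n-2})\bar{\vec S}_n(\psi_n+\psi_{n-2}),\\ \vec\chi_{n,\tau}={}&\tfrac{\mathrm{i}}{2}v_nv_{n+1}\vec S_{n-1}(\psi_{n+2}+\psi_n)-\tfrac{\mathrm{i}}{2}v_nv_{n-1}\vec S_{n-2}(\psi_{n+1}+\psi_{n-1})\\ &+\tfrac{\mathrm{i}}{2}v_nv_{n-1}\vec S_{n+1}(\psi_n+\psi_{n-2})-\tfrac{\mathrm{i}}{2}v_{n-1}v_{n-2}\vec S_n(\psi_{n-1}+\psi_{n-3})\\ &-\tfrac14 v_n(Q_n+Q_{n-1})\vec S_{n-1}(\psi_{n+1}+\psi_{n-1})-\tfrac14 v_{n-1}(Q_{n-1}+Q_{n-2})\vec S_n(\psi_n+\psi_{n-2}). \end{align*} Then the compatibility condition of these overdetermined linear equations (identically in $\psi_n,\vec\phi_n,\vec\chi_n$, after eliminating $\tau$-derivatives and $\lambda$) is equivalent to the system \begin{align*} \vec S_{n,\tau}={}&v_nv_{n+1}(\vec S_{n+2}+\vec S_n)-v_nv_{n-1}(\vec S_n+\vec S_{n-2})+\tfrac{\mathrm{i}}{2}v_n(Q_n+Q_{n-1})(\vec S_{n+1}+\vec S_{n-1}),\\ \bar{\vec S}_{n,\tau}={}&v_nv_{n+1}(\bar{\vec S}_{n+2}+\bar{\vec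 S}_n)-v_nv_{n-1}(\bar{\vec S}_n+\bar{\vec S}_{n-2})-\tfrac{\mathrm{i}}{2}v_n(Q_n+Q_{n-1})(\bar{\vec S}_{n+1}+\bar{\vec S}_{n-1}),\\ v_{n,\tau}={}&2v_n^2(v_{n+1}-v_{n-1})+\tfrac{\mathrm{i}}{2}v_nv_{n+1}\big(\langle\vec S_{n+2},\bar{\vec S}_n\rangle-\langle\vec S_n,\bar{\vec S}_{n+2}\rangle\big)\\ &-\tfrac{\mathrm{i}}{2}v_nv_{n-1}\big(\langle\vec S_n,\bar{\vec S}_{n-2}\rangle-\langle\vec S_{n-2},\bar{\vec S}_n\rangle\big)-\tfrac14 v_n(Q_n+Q_{n-1})(Q_n-Q_{n-1}). \end{align*}
   Context: $n\in\mathbb{Z}$ is the lattice site, $\tau$ a time variable, subscript $\tau$ denotes $\partial/\partial\tau$. $\langle\vec a,\vec b\rangle=\sum_{i=1}^m a^{(i)}b^{(i)}$ is the standard bilinear scalar product (no complex conjugation). The product of a scalar and a column vector is written in either order. $\bar{\vec S}_n$ is an independent vector variable. *)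

theory Defs
  imports "HOL-Analysis.Analysis"
begin

definition bil :: "complex ^ 'm \<Rightarrow> complex ^ 'm \<Rightarrow> complex" where
  "bil a b = (\<Sum>i\<in>UNIV. a $ i * b $ i)"

text \<open>All following definitions work on a snapshot at a fixed time:
  S, Sb :: int => complex^m, v :: int => complex.\<close>

definition Qf :: "(int \<Rightarrow> complex ^ 'm) \<Rightarrow> (int \<Rightarrow> complex ^ 'm) \<Rightarrow> int \<Rightarrow> complex" where
  "Qf S Sb n = bil (S (n+1)) (Sb n) + bil (S n) (Sb (n+1))"

definition spatial ::
  "(int \<Rightarrow> complex ^ 'm) \<Rightarrow> (int \<Rightarrow> complex ^ 'm) \<Rightarrow> (int \<Rightarrow> complex) \<Rightarrow> complex
   \<Rightarrow> (int \<Rightarrow> complex) \<Rightarrow> (int \<Rightarrow> complex ^ 'm) \<Rightarrow> (int \<Rightarrow> complex ^ 'm) \<Rightarrow> bool" where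
  "spatial S Sb v lam psi phi chi \<longleftrightarrow> (\<forall>n.
     v n * (psi (n+1) + psi (n-1)) = lam * psi n - bil (S n) (phi n) - bil (chi n) (Sb n)
   \<and> phi (n+1) - phi n = (\<i>/2 * (psi (n+1) + psi (n-1))) *s Sb n
   \<and> chi (n+1) + chi n = (\<i>/2 * (psi (n+1) + psi (n-1))) *s S n)"

definition Tpsi ::
  "(int \<Rightarrow> complex ^ 'm) \<Rightarrow> (int \<Rightarrow> complex ^ 'm) \<Rightarrow> (int \<Rightarrow> complex) \<Rightarrow> (int \<Rightarrow> complex) \<Rightarrow> int \<Rightarrow> complex" where
  "Tpsi S Sb v psi n =
     v n * v (n+1) * (psi (n+2) + psi n) - v n * v (n-1) * (psi n + psi (n-2))
     + \<i>/2 * v n * (Qf S Sb n + Qf S Sb (n-1)) * (psi (n+1) + psi (n-1))"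

definition Tphi ::
  "(int \<Rightarrow> complex ^ 'm) \<Rightarrow> (int \<Rightarrow> complex ^ 'm) \<Rightarrow> (int \<Rightarrow> complex) \<Rightarrow> (int \<Rightarrow> complex) \<Rightarrow> int \<Rightarrow> complex ^ 'm" where
  "Tphi S Sb v psi n =
       (\<i>/2 * v n * v (n+1) * (psi (n+2) + psi n)) *s Sb (n-1)
     + (\<i>/2 * v n * v (n-1) * (psi (n+1) + psi (n-1))) *s Sb (n-2)
     + (\<i>/2 * v n * v (n-1) * (psi n + psi (n-2))) *s Sb (n+1)
     + (\<i>/2 * v (n-1) * v (n-2) * (psi (n-1) + psi (n-3))) *s Sb n
     - (1/4 * v n * (Qf S Sb n + Qf S Sb (n-1)) * (psi (n+1) + psi (n-1))) *s Sb (n-1)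
     + (1/4 * v (n-1) * (Qf S Sb (n-1) + Qf S Sb (n-2)) * (psi n + psi (n-2))) *s Sb n"

definition Tchi ::
  "(int \<Rightarrow> complex ^ 'm) \<Rightarrow> (int \<Rightarrow> complex ^ 'm) \<Rightarrow> (int \<Rightarrow> complex) \<Rightarrow> (int \<Rightarrow> complex) \<Rightarrow> int \<Rightarrow> complex ^ 'm" where
  "Tchi S Sb v psi n =
       (\<i>/2 * v n * v (n+1) * (psi (n+2) + psi n)) *s S (n-1)
     - (\<i>/2 * v n * v (n-1) * (psi (n+1) + psi (n-1))) *s S (n-2)
     + (\<i>/2 * v n * v (n-1) * (psi n + psi (n-2))) *s S (n+1)
     - (\<i>/2 * v (n-1) * v (n-2) * (psi (n-1) + psi (n-3))) *s S n
     - (1/4 * v n * (Qf S Sb n + Qf S Sb (n-1)) * (psi (n+1) + psi (n-1))) *s S (n-1)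
     - (1/4 * v (n-1) * (Qf S Sb (n-1) + Qf S Sb (n-2)) * (psi n + psi (n-2))) *s S n"

text \<open>Compatibility condition at one time instant: S', Sb', v' are the tau-derivatives.
  Differentiating the spatial equations in tau and replacing psi_tau, phi_tau, chi_tau by
  the time-evolution right-hand sides, the resulting equations must hold for every
  spectral parameter and every solution (psi, phi, chi) of the spatial problem.\<close>
definition compatible ::
  "(int \<Rightarrow> complex ^ 'm) \<Rightarrow> (int \<Rightarrow> complex ^ 'm) \<Rightarrow> (int \<Rightarrow> complex)
   \<Rightarrow> (int \<Rightarrow> complex ^ 'm) \<Rightarrow> (int \<Rightarrow> complex ^ 'm) \<Rightarrow> (int \<Rightarrow> complex) \<Rightarrow> bool" where
  "compatible S Sb v S' Sb' v' \<longleftrightarrow>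
    (\<forall>lam psi phi chi. spatial S Sb v lam psi phi chi \<longrightarrow>
      (let T = Tpsi S Sb v psi; P = Tphi S Sb v psi; X = Tchi S Sb v psi in
       \<forall>n.
         v' n * (psi (n+1) + psi (n-1)) + v n * (T (n+1) + T (n-1))
           = lam * T n - bil (S' n) (phi n) - bil (S n) (P n)
             - bil (X n) (Sb n) - bil (chi n) (Sb' n)
       \<and> P (n+1) - P n = (\<i>/2 * (psi (n+1) + psi (n-1))) *s Sb' n
                         + (\<i>/2 * (T (n+1) + T (n-1))) *s Sb n
       \<and> X (n+1) + X n = (\<i>/2 * (psi (n+1) + psi (n-1))) *s S' n
                         + (\<i>/2 * (T (n+1) + T (n-1))) *s S n))"

end

theory Submission imports Defs begin

definition Sev :: "(int \<Rightarrow> complex ^ 'm) \<Rightarrow> (int \<Rightarrow> complex ^ 'm) \<Rightarrow> (int \<Rightarrow> complex) \<Rightarrow> int \<Rightarrow> complex ^ 'm" where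
 "Sev s sb V n = (V n * V (n+1)) *s (s (n+2) + s n) - (V n * V (n-1)) *s (s n + s (n-2))
                 + (\<i>/2 * V n * (Qf s sb n + Qf s sb (n-1))) *s (s (n+1) + s (n-1))"

definition Sbev :: "(int \<Rightarrow> complex ^ 'm) \<Rightarrow> (int \<Rightarrow> complex ^ 'm) \<Rightarrow> (int \<Rightarrow> complex) \<Rightarrow> int \<Rightarrow> complex ^ 'm" where
 "Sbev s sb V n = (V n * V (n+1)) *s (sb (n+2) + sb n) - (V n * V (n-1)) *s (sb n + sb (n-2))
                 - (\<i>/2 * V n * (Qf s sb n + Qf s sb (n-1))) *s (sb (n+1) + sb (n-1))"

definition vev :: "(int \<Rightarrow> complex ^ 'm) \<Rightarrow> (int \<Rightarrow> complex ^ 'm) \<Rightarrow> (int \<Rightarrow> complex) \<Rightarrow> int \<Rightarrow> complex" where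
 "vev s sb V n = 2 * (V n)^2 * (V (n+1) - V (n-1))
                 + \<i>/2 * V n * V (n+1) * (bil (s (n+2)) (sb n) - bil (s n) (sb (n+2)))
                 - \<i>/2 * V n * V (n-1) * (bil (s n) (sb (n-2)) - bil (s (n-2)) (sb n))
                 - 1/4 * V n * (Qf s sb n + Qf s sb (n-1)) * (Qf s sb n - Qf s sb (n-1))"

lemma idx: "(n::int)+1+2 = n+3" "n+1+1 = n+2" "n+1-1 = n" "n+1-2 = n-1" "n+1-3 = n-2"
  "n-1+2 = n+1" "n-1+1 = n" "n-1-1 = n-2" "n-1-2=n-3" "n-1-3 = n-4" "n-2+1 = n-1" "n-2-1 = n-3" "n+2-1 = n+1"
  "n-2+2 = n" "n+2-2 = n" "n+2+1 = n+3" "n+2+2 = n+4" "n-2-2 = n-4" "n-2-3 = n-5"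
  by simp_all

lemma bil_add_l: "bil (a+b) c = bil a c + bil b c"
  by (simp add: bil_def sum.distrib algebra_simps)
lemma bil_add_r: "bil a (b+c) = bil a b + bil a c"
  by (simp add: bil_def sum.distrib algebra_simps)
lemma bil_diff_l: "bil (a-b) c = bil a c - bil b c"
  by (simp add: bil_def sum_subtractf algebra_simps)
lemma bil_diff_r: "bil a (b-c) = bil a b - bil a c"
  by (simp add: bil_def sum_subtractf algebra_simps)
lemma bil_smult_l: "bil (x *s a) b = x * bil a b"
  by (simp add: bil_def sum_distrib_left algebra_simps)
lemma bil_smult_r: "bil a (x *s b) = x * bil a b"
  by (simp add: bil_def sum_distrib_left algebra_simps)
lemma bil_zero_l: "bil 0 b = 0"
  by (simp add: bil_def)
lemma bil_zero_r: "bil a 0 = 0"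
  by (simp add: bil_def)

lemmas bil_lin = bil_add_l bil_add_r bil_diff_l bil_diff_r bil_smult_l bil_smult_r

lemma eq2:
  "Tphi S Sb v psi (n+1) - Tphi S Sb v psi n = (\<i>/2*(psi(n+1)+psi(n-1))) *s Sbev S Sb v n
     + (\<i>/2*(Tpsi S Sb v psi (n+1) + Tpsi S Sb v psi (n-1))) *s Sb n"
  unfolding Tphi_def Tpsi_def Sbev_def idx
  apply (simp only: vec_eq_iff vector_add_component vector_minus_component vector_smult_component)
  apply (intro allI)
  apply (simp add: field_simps)
  done

lemma eq3:
  "Tchi S Sb v psi (n+1) + Tchi S Sb v psi n = (\<i>/2*(psi(n+1)+psi(n-1))) *s Sev S Sb v n
     + (\<i>/2*(Tpsi S Sb v psi (n+1) + Tpsi S Sb v psi (n-1))) *s S n"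
  unfolding Tchi_def Tpsi_def Sev_def idx
  apply (simp only: vec_eq_iff vector_add_component vector_minus_component vector_smult_component)
  apply (intro allI)
  apply (simp add: field_simps)
  done

lemma eq1:
  assumes sp: "spatial S Sb v lam psi phi chi"
  shows "vev S Sb v n * (psi(n+1)+psi(n-1)) + v n * (Tpsi S Sb v psi (n+1) + Tpsi S Sb v psi (n-1))
     = lam * Tpsi S Sb v psi n - bil (Sev S Sb v n) (phi n) - bil (S n) (Tphi S Sb v psi n)
       - bil (Tchi S Sb v psi n) (Sb n) - bil (chi n) (Sbev S Sb v n)"
proof -
  define c where "c k = \<i>/2 * (psi (k+1) + psi (k-1))" for k
  have L: "lam * psi k = v k * (psi(k+1)+psi(k-1)) + bil (S k) (phi k) + bil (chi k) (Sb k)" for k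
  proof -
    have "v k * (psi (k+1) + psi (k-1)) = lam * psi k - bil (S k) (phi k) - bil (chi k) (Sb k)"
      using sp unfolding spatial_def by blast
    then show ?thesis by (simp add: algebra_simps)
  qed
  have P: "phi (k+1) = phi k + c k *s Sb k" for k
  proof -
    have "phi (k+1) - phi k = c k *s Sb k"
      using sp unfolding spatial_def c_def by blast
    then show ?thesis by (simp add: algebra_simps)
  qed
  have C: "chi (k+1) = c k *s S k - chi k" for k
  proof -
    have "chi (k+1) + chi k = c k *s S k"
      using sp unfolding spatial_def c_def by blast
    then show ?thesis by (simp add: algebra_simps)
  qed
  have p1: "phi (n+1) = phi n + c n *s Sb n" by (rule P)
  have p2: "phi (n+2) = phi n + c n *s Sb n + c (n+1) *s Sb (n+1)"
    using P[of "n+1"] p1 by (simp add: idx)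
  have pm1: "phi (n-1) = phi n - c (n-1) *s Sb (n-1)"
    using P[of "n-1"] by (simp add: algebra_simps)
  have pm2: "phi (n-2) = phi n - c (n-1) *s Sb (n-1) - c (n-2) *s Sb (n-2)"
    using P[of "n-2"] pm1 by (simp add: idx algebra_simps)
  have c1: "chi (n+1) = c n *s S n - chi n" by (rule C)
  have c2: "chi (n+2) = c (n+1) *s S (n+1) - c n *s S n + chi n"
    using C[of "n+1"] c1 by (simp add: idx)
  have cm1: "chi (n-1) = c (n-1) *s S (n-1) - chi n"
    using C[of "n-1"] by (simp add: algebra_simps)
  have cm2: "chi (n-2) = c (n-2) *s S (n-2) - c (n-1) *s S (n-1) + chi n"
    using C[of "n-2"] cm1 by (simp add: idx algebra_simps)
  have Lp2: "lam * psi (n+2) = v (n+2) * (psi(n+3)+psi(n+1)) + bil (S (n+2)) (phi n)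
      + c n * bil (S (n+2)) (Sb n) + c (n+1) * bil (S (n+2)) (Sb (n+1))
      + c (n+1) * bil (S (n+1)) (Sb (n+2)) - c n * bil (S n) (Sb (n+2)) + bil (chi n) (Sb (n+2))"
    using L[of "n+2"] unfolding p2 c2 idx bil_lin by simp
  have Lp1: "lam * psi (n+1) = v (n+1) * (psi(n+2)+psi n) + bil (S (n+1)) (phi n)
      + c n * Qf S Sb n - bil (chi n) (Sb (n+1))"
    using L[of "n+1"] unfolding p1 c1 idx bil_lin Qf_def by (simp add: algebra_simps)
  have L0: "lam * psi n = v n * (psi(n+1)+psi (n-1)) + bil (S n) (phi n) + bil (chi n) (Sb n)"
    by (rule L)
  have Lm1: "lam * psi (n-1) = v (n-1) * (psi n+psi (n-2)) + bil (S (n-1)) (phi n)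
      - bil (chi n) (Sb (n-1))"
    using L[of "n-1"] unfolding pm1 cm1 idx bil_lin by simp
  have Lm2: "lam * psi (n-2) = v (n-2) * (psi (n-1)+psi (n-3)) + bil (S (n-2)) (phi n)
      - c (n-1) * Qf S Sb (n-2) + bil (chi n) (Sb (n-2))"
    using L[of "n-2"] unfolding pm2 cm2 idx bil_lin Qf_def by (simp add: algebra_simps)
  have Lp2': "lam * psi (n+2) = v (n+2) * (psi(n+3)+psi(n+1)) + bil (S (n+2)) (phi n)
      + c n * bil (S (n+2)) (Sb n) + c (n+1) * Qf S Sb (n+1)
      - c n * bil (S n) (Sb (n+2)) + bil (chi n) (Sb (n+2))"
    using Lp2 unfolding Qf_def idx by (simp add: algebra_simps)
  have lamT: "lam * Tpsi S Sb v psi n = v n * v (n+1) * (lam * psi (n+2) + lam * psi n) - v n * v (n-1) * (lam * psi n + lam * psi (n-2))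
     + \<i>/2 * v n * (Qf S Sb n + Qf S Sb (n-1)) * (v (n+1) * (psi(n+2)+psi n) + bil (S (n+1)) (phi n)
        - bil (chi n) (Sb (n+1)) + v (n-1) * (psi n+psi (n-2)) + bil (S (n-1)) (phi n) - bil (chi n) (Sb (n-1)))
     - 1/4 * v n * (Qf S Sb n + Qf S Sb (n-1)) * (psi (n+1) + psi (n-1)) * Qf S Sb n"
  proof -
    have "lam * Tpsi S Sb v psi n = v n * v (n+1) * (lam * psi (n+2) + lam * psi n) - v n * v (n-1) * (lam * psi n + lam * psi (n-2))
     + \<i>/2 * v n * (Qf S Sb n + Qf S Sb (n-1)) * (lam * psi (n+1) + lam * psi (n-1))"
      unfolding Tpsi_def by (simp add: algebra_simps add_divide_distrib diff_divide_distrib power2_eq_square)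
    then show ?thesis unfolding Lp1 Lm1 c_def by (simp add: algebra_simps add_divide_distrib diff_divide_distrib power2_eq_square)
  qed
  have FA: "bil (Sev S Sb v n) (phi n) = v n * v (n+1) * (bil (S (n+2)) (phi n) + bil (S n) (phi n))
      - v n * v (n-1) * (bil (S n) (phi n) + bil (S (n-2)) (phi n))
      + \<i>/2 * v n * (Qf S Sb n + Qf S Sb (n-1)) * (bil (S (n+1)) (phi n) + bil (S (n-1)) (phi n))"
    unfolding Sev_def bil_lin by (simp add: algebra_simps add_divide_distrib diff_divide_distrib power2_eq_square)
  have GA: "bil (chi n) (Sbev S Sb v n) = v n * v (n+1) * (bil (chi n) (Sb (n+2)) + bil (chi n) (Sb n))
      - v n * v (n-1) * (bil (chi n) (Sb n) + bil (chi n) (Sb (n-2)))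
      - \<i>/2 * v n * (Qf S Sb n + Qf S Sb (n-1)) * (bil (chi n) (Sb (n+1)) + bil (chi n) (Sb (n-1)))"
    unfolding Sbev_def bil_lin by (simp add: algebra_simps add_divide_distrib diff_divide_distrib power2_eq_square)
  have PS: "vev S Sb v n * (psi (n+1) + psi (n-1)) =
     v n * v (n+1) * (v (n+2) * (psi(n+3)+psi(n+1)) + c n * bil (S (n+2)) (Sb n) + c (n+1) * Qf S Sb (n+1)
        - c n * bil (S n) (Sb (n+2)) + v n * (psi(n+1)+psi (n-1)))
     - v n * v (n-1) * (v n * (psi(n+1)+psi (n-1)) + v (n-2) * (psi (n-1)+psi (n-3)) - c (n-1) * Qf S Sb (n-2))
     + \<i>/2 * v n * (Qf S Sb n + Qf S Sb (n-1)) * (v (n+1) * (psi(n+2)+psi n) + v (n-1) * (psi n+psi (n-2)))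
     - 1/4 * v n * (Qf S Sb n + Qf S Sb (n-1)) * (psi (n+1) + psi (n-1)) * Qf S Sb n
     - bil (S n) (Tphi S Sb v psi n) - bil (Tchi S Sb v psi n) (Sb n)
     - v n * (Tpsi S Sb v psi (n+1) + Tpsi S Sb v psi (n-1))"
    unfolding vev_def Tpsi_def Tphi_def Tchi_def bil_lin idx c_def Qf_def[of S Sb n] Qf_def[of S Sb "n-1"]
    by (simp add: algebra_simps add_divide_distrib diff_divide_distrib power2_eq_square)
  show ?thesis
    unfolding lamT Lp2' L0 Lm2 FA GA PS c_def
    by (simp add: algebra_simps add_divide_distrib diff_divide_distrib power2_eq_square)
qed
primrec fwd :: "(int \<Rightarrow> 'a \<Rightarrow> 'a) \<Rightarrow> int \<Rightarrow> 'a \<Rightarrow> nat \<Rightarrow> 'a" where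
  "fwd F n0 x0 0 = x0"
| "fwd F n0 x0 (Suc j) = F (n0 + int j) (fwd F n0 x0 j)"

primrec bwd :: "(int \<Rightarrow> 'a \<Rightarrow> 'a) \<Rightarrow> int \<Rightarrow> 'a \<Rightarrow> nat \<Rightarrow> 'a" where
  "bwd B n0 x0 0 = x0"
| "bwd B n0 x0 (Suc j) = B (n0 - int j - 1) (bwd B n0 x0 j)"

lemma bi_rec:
  fixes F B :: "int \<Rightarrow> 'a \<Rightarrow> 'a"
  assumes FB: "\<And>k y. F k (B k y) = y"
  shows "\<exists>x. x n0 = x0 \<and> (\<forall>k. x (k+1) = F k (x k))"
proof -
  define x where "x k = (if n0 \<le> k then fwd F n0 x0 (nat (k - n0)) else bwd B n0 x0 (nat (n0 - k)))" for k
  have "x (k+1) = F k (x k)" for k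
  proof (cases "n0 \<le> k")
    case True
    then have "nat (k + 1 - n0) = Suc (nat (k - n0))" by simp
    with True show ?thesis by (simp add: x_def)
  next
    case False
    define i where "i = nat (n0 - k - 1)"
    have xk: "x k = B k (bwd B n0 x0 i)"
    proof -
      have "nat (n0 - k) = Suc i" using False by (simp add: i_def)
      moreover have "n0 - int i - 1 = k" using False by (simp add: i_def)
      ultimately show ?thesis using False by (simp add: x_def)
    qed
    have xk1: "x (k+1) = bwd B n0 x0 i"
    proof (cases "k + 1 = n0")
      case True
      then show ?thesis by (simp add: x_def i_def)
    next
      case False
      with \<open>\<not> n0 \<le> k\<close> have "\<not> n0 \<le> k + 1" by simp
      moreover have "nat (n0 - (k+1)) = i" by (simp add: i_def)
      ultimately show ?thesis by (simp add: x_def)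
    qed
    show ?thesis using xk xk1 FB by simp
  qed
  moreover have "x n0 = x0" by (simp add: x_def)
  ultimately show ?thesis by blast
qed

lemma sol_exists:
  fixes S Sb :: "int \<Rightarrow> complex ^ 'm" and v :: "int \<Rightarrow> complex"
  assumes vnz: "\<And>k. v k \<noteq> 0"
  shows "\<exists>psi phi chi. spatial S Sb v 1 psi phi chi \<and> psi (n+1) + psi (n-1) = 1 / v n"
proof -
  define W where "W k p1 ph ch = (p1 - bil (S k) ph - bil ch (Sb k)) / v k" for k p1 ph ch
  define F :: "int \<Rightarrow> complex \<times> complex \<times> (complex^'m) \<times> (complex^'m) \<Rightarrow> complex \<times> complex \<times> (complex^'m) \<times> (complex^'m)"
    where "F k y = (case y of (p0, p1, ph, ch) \<Rightarrow>
       (p1, W k p1 ph ch - p0, ph + (\<i>/2 * W k p1 ph ch) *s Sb k, (\<i>/2 * W k p1 ph ch) *s S k - ch))" for k y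
  define WB where "WB k q0 ph ch = (q0 - bil (S k) ph + bil ch (Sb k)) / v k" for k q0 ph ch
  define B :: "int \<Rightarrow> complex \<times> complex \<times> (complex^'m) \<times> (complex^'m) \<Rightarrow> complex \<times> complex \<times> (complex^'m) \<times> (complex^'m)"
    where "B k y = (case y of (q0, q1, ph, ch) \<Rightarrow>
       (WB k q0 ph ch - q1, q0, ph - (\<i>/2 * WB k q0 ph ch) *s Sb k, (\<i>/2 * WB k q0 ph ch) *s S k - ch))" for k y
  have FB: "F k (B k y) = y" for k y
  proof -
    obtain q0 q1 ph ch where y: "y = (q0, q1, ph, ch)" by (cases y) auto
    define w where "w = WB k q0 ph ch"
    have "W k q0 (ph - (\<i>/2 * w) *s Sb k) ((\<i>/2 * w) *s S k - ch) = w"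
      unfolding W_def w_def WB_def bil_lin by (simp add: algebra_simps)
    then show ?thesis unfolding y B_def F_def by (simp add: w_def[symmetric])
  qed
  obtain x where x0: "x n = (0, 1, 0, 0)" and xs: "\<forall>k. x (k+1) = F k (x k)"
    using bi_rec[of F B, OF FB] by blast
  define psi where "psi k = fst (snd (x k))" for k
  define phi where "phi k = fst (snd (snd (x k)))" for k
  define chi where "chi k = snd (snd (snd (x k)))" for k
  have fstx: "fst (x k) = psi (k - 1)" for k
    using xs[rule_format, of "k-1"] by (simp add: psi_def F_def split: prod.splits)
  have step: "psi (k+1) + psi (k-1) = W k (psi k) (phi k) (chi k)
      \<and> phi (k+1) = phi k + (\<i>/2 * W k (psi k) (phi k) (chi k)) *s Sb k
      \<and> chi (k+1) = (\<i>/2 * W k (psi k) (phi k) (chi k)) *s S k - chi k" for k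
  proof -
    obtain p0 p1 ph ch where xk: "x k = (p0, p1, ph, ch)" by (cases "x k") auto
    have "p0 = psi (k-1)" using fstx[of k] xk by simp
    then show ?thesis using xs[rule_format, of k] xk by (simp add: psi_def phi_def chi_def F_def)
  qed
  have sp: "spatial S Sb v 1 psi phi chi"
    unfolding spatial_def
  proof (intro allI conjI)
    fix k
    show "v k * (psi (k + 1) + psi (k - 1)) = 1 * psi k - bil (S k) (phi k) - bil (chi k) (Sb k)"
      using step[of k] vnz[of k] by (simp add: W_def)
    show "phi (k + 1) - phi k = (\<i> / 2 * (psi (k + 1) + psi (k - 1))) *s Sb k"
      using step[of k] by simp
    show "chi (k + 1) + chi k = (\<i> / 2 * (psi (k + 1) + psi (k - 1))) *s S k"
      using step[of k] by simp
  qed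
  have "psi (n+1) + psi (n-1) = 1 / v n"
    using step[of n] x0 by (simp add: W_def psi_def phi_def chi_def bil_zero_l bil_zero_r)
  with sp show ?thesis by blast
qed
theorem proposition2p2:
  fixes S Sb S' Sb' :: "int \<Rightarrow> real \<Rightarrow> complex ^ 'm"
    and v v' :: "int \<Rightarrow> real \<Rightarrow> complex"
  assumes dS: "\<And>n t. (S n has_vector_derivative S' n t) (at t)"
    and dSb: "\<And>n t. (Sb n has_vector_derivative Sb' n t) (at t)"
    and dv: "\<And>n t. (v n has_vector_derivative v' n t) (at t)"
    and vnz: "\<And>n t. v n t \<noteq> 0"
  shows "(\<forall>t. compatible (\<lambda>n. S n t) (\<lambda>n. Sb n t) (\<lambda>n. v n t)
                         (\<lambda>n. S' n t) (\<lambda>n. Sb' n t) (\<lambda>n. v' n t))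
     \<longleftrightarrow>
     (\<forall>n t.
        let Q = Qf (\<lambda>k. S k t) (\<lambda>k. Sb k t); V = (\<lambda>k. v k t);
            s = (\<lambda>k. S k t); sb = (\<lambda>k. Sb k t) in
        S' n t = (V n * V (n+1)) *s (s (n+2) + s n) - (V n * V (n-1)) *s (s n + s (n-2))
                 + (\<i>/2 * V n * (Q n + Q (n-1))) *s (s (n+1) + s (n-1))
      \<and> Sb' n t = (V n * V (n+1)) *s (sb (n+2) + sb n) - (V n * V (n-1)) *s (sb n + sb (n-2))
                 - (\<i>/2 * V n * (Q n + Q (n-1))) *s (sb (n+1) + sb (n-1))
      \<and> v' n t = 2 * (V n)^2 * (V (n+1) - V (n-1))
                 + \<i>/2 * V n * V (n+1) * (bil (s (n+2)) (sb n) - bil (s n) (sb (n+2)))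
                 - \<i>/2 * V n * V (n-1) * (bil (s n) (sb (n-2)) - bil (s (n-2)) (sb n))
                 - 1/4 * V n * (Q n + Q (n-1)) * (Q n - Q (n-1)))"
  proof -
  let ?s = "\<lambda>t k. S k t" and ?sb = "\<lambda>t k. Sb k t" and ?V = "\<lambda>t k. v k t"
  have R: "(\<forall>n t.
        let Q = Qf (\<lambda>k. S k t) (\<lambda>k. Sb k t); V = (\<lambda>k. v k t);
            s = (\<lambda>k. S k t); sb = (\<lambda>k. Sb k t) in
        S' n t = (V n * V (n+1)) *s (s (n+2) + s n) - (V n * V (n-1)) *s (s n + s (n-2))
                 + (\<i>/2 * V n * (Q n + Q (n-1))) *s (s (n+1) + s (n-1))
      \<and> Sb' n t = (V n * V (n+1)) *s (sb (n+2) + sb n) - (V n * V (n-1)) *s (sb n + sb (n-2))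
                 - (\<i>/2 * V n * (Q n + Q (n-1))) *s (sb (n+1) + sb (n-1))
      \<and> v' n t = 2 * (V n)^2 * (V (n+1) - V (n-1))
                 + \<i>/2 * V n * V (n+1) * (bil (s (n+2)) (sb n) - bil (s n) (sb (n+2)))
                 - \<i>/2 * V n * V (n-1) * (bil (s n) (sb (n-2)) - bil (s (n-2)) (sb n))
                 - 1/4 * V n * (Q n + Q (n-1)) * (Q n - Q (n-1)))
     \<longleftrightarrow> (\<forall>n t. S' n t = Sev (?s t) (?sb t) (?V t) n \<and> Sb' n t = Sbev (?s t) (?sb t) (?V t) n
              \<and> v' n t = vev (?s t) (?sb t) (?V t) n)"
    unfolding Let_def Sev_def Sbev_def vev_def by simp
  show ?thesis
    unfolding R
  proof
    assume C: "\<forall>t. compatible (\<lambda>n. S n t) (\<lambda>n. Sb n t) (\<lambda>n. v n t) (\<lambda>n. S' n t) (\<lambda>n. Sb' n t) (\<lambda>n. v' n t)"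
    show "\<forall>n t. S' n t = Sev (?s t) (?sb t) (?V t) n \<and> Sb' n t = Sbev (?s t) (?sb t) (?V t) n
              \<and> v' n t = vev (?s t) (?sb t) (?V t) n"
    proof (intro allI)
      fix n t
      obtain psi phi chi where sp: "spatial (?s t) (?sb t) (?V t) 1 psi phi chi"
        and u: "psi (n+1) + psi (n-1) = 1 / v n t"
        using sol_exists[of "?V t" "?s t" "?sb t" n] vnz by auto
      have unz: "\<i>/2 * (psi (n+1) + psi (n-1)) \<noteq> 0" using u vnz[of n t] by simp
      have unz': "psi (n+1) + psi (n-1) \<noteq> 0" using u vnz[of n t] by simp
      have C1: "v' n t * (psi (n+1) + psi (n-1)) + v n t * (Tpsi (?s t) (?sb t) (?V t) psi (n+1) + Tpsi (?s t) (?sb t) (?V t) psi (n-1))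
           = 1 * Tpsi (?s t) (?sb t) (?V t) psi n - bil (S' n t) (phi n) - bil (S n t) (Tphi (?s t) (?sb t) (?V t) psi n)
             - bil (Tchi (?s t) (?sb t) (?V t) psi n) (Sb n t) - bil (chi n) (Sb' n t)"
       and C2: "Tphi (?s t) (?sb t) (?V t) psi (n+1) - Tphi (?s t) (?sb t) (?V t) psi n
             = (\<i>/2 * (psi (n+1) + psi (n-1))) *s Sb' n t
               + (\<i>/2 * (Tpsi (?s t) (?sb t) (?V t) psi (n+1) + Tpsi (?s t) (?sb t) (?V t) psi (n-1))) *s Sb n t"
       and C3: "Tchi (?s t) (?sb t) (?V t) psi (n+1) + Tchi (?s t) (?sb t) (?V t) psi n
             = (\<i>/2 * (psi (n+1) + psi (n-1))) *s S' n t
               + (\<i>/2 * (Tpsi (?s t) (?sb t) (?V t) psi (n+1) + Tpsi (?s t) (?sb t) (?V t) psi (n-1))) *s S n t"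
        using C[rule_format, of t] sp unfolding compatible_def Let_def by blast+
      note e2 = eq2[of "?s t" "?sb t" "?V t" psi n]
      note e3 = eq3[of "?s t" "?sb t" "?V t" psi n]
      have hS: "S' n t = Sev (?s t) (?sb t) (?V t) n"
        using C3 e3 unz by simp
      have hSb: "Sb' n t = Sbev (?s t) (?sb t) (?V t) n"
        using C2 e2 unz by simp
      note e1 = eq1[OF sp, of n]
      have "v' n t * (psi (n+1) + psi (n-1)) = vev (?s t) (?sb t) (?V t) n * (psi (n+1) + psi (n-1))"
      proof -
        have C1': "v' n t * (psi (n+1) + psi (n-1)) + v n t * (Tpsi (?s t) (?sb t) (?V t) psi (n+1) + Tpsi (?s t) (?sb t) (?V t) psi (n-1))
           = 1 * Tpsi (?s t) (?sb t) (?V t) psi n - bil (Sev (?s t) (?sb t) (?V t) n) (phi n) - bil (S n t) (Tphi (?s t) (?sb t) (?V t) psi n)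
             - bil (Tchi (?s t) (?sb t) (?V t) psi n) (Sb n t) - bil (chi n) (Sbev (?s t) (?sb t) (?V t) n)"
          using C1 unfolding hS hSb .
        show ?thesis using trans[OF C1' sym[OF e1]] by (rule add_right_imp_eq)
      qed
      then have hv: "v' n t = vev (?s t) (?sb t) (?V t) n" using unz' by simp
      show "S' n t = Sev (?s t) (?sb t) (?V t) n \<and> Sb' n t = Sbev (?s t) (?sb t) (?V t) n
              \<and> v' n t = vev (?s t) (?sb t) (?V t) n" using hS hSb hv by blast
    qed
  next
    assume E: "\<forall>n t. S' n t = Sev (?s t) (?sb t) (?V t) n \<and> Sb' n t = Sbev (?s t) (?sb t) (?V t) n
              \<and> v' n t = vev (?s t) (?sb t) (?V t) n"
    show "\<forall>t. compatible (\<lambda>n. S n t) (\<lambda>n. Sb n t) (\<lambda>n. v n t) (\<lambda>n. S' n t) (\<lambda>n. Sb' n t) (\<lambda>n. v' n t)"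
    proof
      fix t
      have S'e: "(\<lambda>n. S' n t) = Sev (?s t) (?sb t) (?V t)" using E by auto
      have Sb'e: "(\<lambda>n. Sb' n t) = Sbev (?s t) (?sb t) (?V t)" using E by auto
      have v'e: "(\<lambda>n. v' n t) = vev (?s t) (?sb t) (?V t)" using E by auto
      show "compatible (\<lambda>n. S n t) (\<lambda>n. Sb n t) (\<lambda>n. v n t) (\<lambda>n. S' n t) (\<lambda>n. Sb' n t) (\<lambda>n. v' n t)"
        unfolding S'e Sb'e v'e compatible_def Let_def
      proof (intro allI impI conjI)
        fix lam psi phi chi n
        assume sp: "spatial (\<lambda>n. S n t) (\<lambda>n. Sb n t) (\<lambda>n. v n t) lam psi phi chi"
        show "vev (?s t) (?sb t) (?V t) n * (psi (n+1) + psi (n-1)) + v n t * (Tpsi (?s t) (?sb t) (?V t) psi (n+1) + Tpsi (?s t) (?sb t) (?V t) psi (n-1))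
           = lam * Tpsi (?s t) (?sb t) (?V t) psi n - bil (Sev (?s t) (?sb t) (?V t) n) (phi n) - bil (S n t) (Tphi (?s t) (?sb t) (?V t) psi n)
             - bil (Tchi (?s t) (?sb t) (?V t) psi n) (Sb n t) - bil (chi n) (Sbev (?s t) (?sb t) (?V t) n)"
          using eq1[OF sp, of n] by simp
        show "Tphi (?s t) (?sb t) (?V t) psi (n+1) - Tphi (?s t) (?sb t) (?V t) psi n
             = (\<i>/2 * (psi (n+1) + psi (n-1))) *s Sbev (?s t) (?sb t) (?V t) n
               + (\<i>/2 * (Tpsi (?s t) (?sb t) (?V t) psi (n+1) + Tpsi (?s t) (?sb t) (?V t) psi (n-1))) *s Sb n t"
          using eq2[of "?s t" "?sb t" "?V t" psi n] by simp
        show "Tchi (?s t) (?sb t) (?V t) psi (n+1) + Tchi (?s t) (?sb t) (?V t) psi n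
             = (\<i>/2 * (psi (n+1) + psi (n-1))) *s Sev (?s t) (?sb t) (?V t) n
               + (\<i>/2 * (Tpsi (?s t) (?sb t) (?V t) psi (n+1) + Tpsi (?s t) (?sb t) (?V t) psi (n-1))) *s S n t"
          using eq3[of "?s t" "?sb t" "?V t" psi n] by simp
      qed
    qed
  qed
qed

end
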